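(* Let $\mathscr{S}=(T,S,\sigma,\mu,\tau_T,\tau_S)$ be a relaxed scenario. If $G_{=}(\mathscr{S})$ contains an induced path $a-b-c-d$ on four vertices, then either ($ad\in E(G_{<}(\mathscr{S}))$ and $ac,bd\in E(G_{>}(\mathscr{S}))$) or ($ad\in E(G_{>}(\mathscr{S}))$ and $ac,bd\in E(G_{<}(\mathscr{S}))$). In either case, both $\{a,b,d\}$ and $\{a,c,d\}$ are rainbow triangles.
   Context: All trees are planted phylogenetic trees: a tree $T$ has a distinguished vertex $0_T$ of degree $1$ whose unique neighbor $\rho_T$ is the root, and every vertex other than $0_T$ and the leaves $L(T)$ has at least two children. For $x,y\in V(T)$ write $y\preceq_T x$ if $x$ lies on the path from $0_T$ to $y$; edges are written $uv$ with $v\prec_T u$. $\mathrm{lca}_T$ denotes the last common ancestor. A time map for $T$ is $\tau_T\colon V(T)\to\mathbb{R}$ with $\tau_T(x)<\tau_T(y)$ whenever $x\prec_T y$. A relaxed scenario $\mathscr{S}=(T,S,\sigma,\mu,\tau_T,\tau_S)$ consists of a gene tree $T$ with time map $\tau_T$, a species tree $S$ with time map $\tau_S$, a map $\sigma\colon L(T)\to M$ with $M\subseteq L(S)$, and a map $\mu\colon V(T)\to V(S)\cup E(S)$ such that (S0) $\mu(x)=0_S$ iff $x=0_T$; (S1) $\mu(x)\in L(S)$ iff $x\in L(T)$, in which case $\mu(x)=\sigma(x)$; (S2) if $\mu(x)\in V(S)$ then $\tau_S(\mu(x))=\tau_T(x)$; (S3) if $\mu(x)=uv\in E(S)$ then $\tau_S(v)<\tau_T(x)<\tau_S(u)$.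 The graphs $G_{=}(\mathscr{S})$, $G_{<}(\mathscr{S})$, $G_{>}(\mathscr{S})$ have vertex set $L(T)$, and for distinct $x,y$ the pair $xy$ is an edge of $G_{=}(\mathscr{S})$, $G_{<}(\mathscr{S})$, resp. $G_{>}(\mathscr{S})$ iff $\tau_T(\mathrm{lca}_T(x,y))$ is $=$, $<$, resp. $>$ than $\tau_S(\mathrm{lca}_S(\sigma(x),\sigma(y)))$. A rainbow triangle is a set of three vertices whose three pairs lie in three different graphs among $G_{<}(\mathscr{S})$, $G_{=}(\mathscr{S})$, $G_{>}(\mathscr{S})$. *)

theory Defs
  imports Complex_Main
begin

text \<open>A tree is given by a finite vertex set V, a set E of directed edges (u,v)
  with v a child of u, and the planted vertex r0 (= 0_T).\<close>

definition preceq :: "('v \<times> 'v) set \<Rightarrow> 'v \<Rightarrow> 'v \<Rightarrow> bool" where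
  "preceq E y x \<longleftrightarrow> (x, y) \<in> E\<^sup>*"   \<comment> \<open>y \<preceq> x: x lies on the path from 0 to y\<close>

definition prec :: "('v \<times> 'v) set \<Rightarrow> 'v \<Rightarrow> 'v \<Rightarrow> bool" where
  "prec E y x \<longleftrightarrow> preceq E y x \<and> y \<noteq> x"

definition children :: "('v \<times> 'v) set \<Rightarrow> 'v \<Rightarrow> 'v set" where
  "children E u = {v. (u, v) \<in> E}"

definition leaves :: "'v set \<Rightarrow> ('v \<times> 'v) set \<Rightarrow> 'v set" where
  "leaves V E = {v \<in> V. children E v = {}}"

definition planted_phylo_tree :: "'v set \<Rightarrow> ('v \<times> 'v) set \<Rightarrow> 'v \<Rightarrow> bool" where
  "planted_phylo_tree V E r0 \<longleftrightarrow>
     finite V \<and> E \<subseteq> V \<times> V \<and> r0 \<in> V \<and>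
     (\<forall>v \<in> V. (r0, v) \<in> E\<^sup>*) \<and>
     (\<forall>u. (u, r0) \<notin> E) \<and>
     (\<forall>v \<in> V - {r0}. \<exists>!u. (u, v) \<in> E) \<and>
     card (children E r0) = 1 \<and>
     (\<forall>v \<in> V - {r0} - leaves V E. card (children E v) \<ge> 2)"

definition lca :: "'v set \<Rightarrow> ('v \<times> 'v) set \<Rightarrow> 'v \<Rightarrow> 'v \<Rightarrow> 'v" where
  "lca V E x y = (THE z. z \<in> V \<and> preceq E x z \<and> preceq E y z \<and>
       (\<forall>w \<in> V. preceq E x w \<and> preceq E y w \<longrightarrow> preceq E z w))"

definition time_map :: "'v set \<Rightarrow> ('v \<times> 'v) set \<Rightarrow> ('v \<Rightarrow> real) \<Rightarrow> bool" where
  "time_map V E \<tau> \<longleftrightarrow> (\<forall>x \<in> V. \<forall>y \<in> V. prec E x y \<longrightarrow> \<tau> x < \<tau> y)"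

text \<open>mu maps gene-tree vertices to species-tree vertices (Inl v) or edges (Inr (u,v)).\<close>

record ('g, 's) scenario =
  VT :: "'g set"
  ET :: "('g \<times> 'g) set"
  rT :: 'g
  VS :: "'s set"
  ES :: "('s \<times> 's) set"
  rS :: 's
  sigma :: "'g \<Rightarrow> 's"
  mu :: "'g \<Rightarrow> 's + ('s \<times> 's)"
  tauT :: "'g \<Rightarrow> real"
  tauS :: "'s \<Rightarrow> real"

abbreviation LT :: "('g, 's, 'z) scenario_scheme \<Rightarrow> 'g set" where
  "LT Sc \<equiv> leaves (VT Sc) (ET Sc)"

abbreviation LS :: "('g, 's, 'z) scenario_scheme \<Rightarrow> 's set" where
  "LS Sc \<equiv> leaves (VS Sc) (ES Sc)"

definition relaxed_scenario :: "('g, 's, 'z) scenario_scheme \<Rightarrow> bool" where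
  "relaxed_scenario Sc \<longleftrightarrow>
     planted_phylo_tree (VT Sc) (ET Sc) (rT Sc) \<and>
     planted_phylo_tree (VS Sc) (ES Sc) (rS Sc) \<and>
     time_map (VT Sc) (ET Sc) (tauT Sc) \<and>
     time_map (VS Sc) (ES Sc) (tauS Sc) \<and>
     (\<forall>x \<in> LT Sc. sigma Sc x \<in> LS Sc) \<and>
     (\<forall>x \<in> VT Sc. case mu Sc x of Inl v \<Rightarrow> v \<in> VS Sc | Inr e \<Rightarrow> e \<in> ES Sc) \<and>
     \<comment> \<open>(S0)\<close>
     (\<forall>x \<in> VT Sc. mu Sc x = Inl (rS Sc) \<longleftrightarrow> x = rT Sc) \<and>
     \<comment> \<open>(S1)\<close>
     (\<forall>x \<in> VT Sc. (\<exists>v \<in> LS Sc. mu Sc x = Inl v) \<longleftrightarrow> x \<in> LT Sc) \<and>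
     (\<forall>x \<in> LT Sc. mu Sc x = Inl (sigma Sc x)) \<and>
     \<comment> \<open>(S2)\<close>
     (\<forall>x \<in> VT Sc. \<forall>v. mu Sc x = Inl v \<longrightarrow> tauS Sc v = tauT Sc x) \<and>
     \<comment> \<open>(S3)\<close>
     (\<forall>x \<in> VT Sc. \<forall>u v. mu Sc x = Inr (u, v) \<longrightarrow>
         tauS Sc v < tauT Sc x \<and> tauT Sc x < tauS Sc u)"

definition tT_lca :: "('g, 's, 'z) scenario_scheme \<Rightarrow> 'g \<Rightarrow> 'g \<Rightarrow> real" where
  "tT_lca Sc x y = tauT Sc (lca (VT Sc) (ET Sc) x y)"

definition tS_lca :: "('g, 's, 'z) scenario_scheme \<Rightarrow> 'g \<Rightarrow> 'g \<Rightarrow> real" where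
  "tS_lca Sc x y = tauS Sc (lca (VS Sc) (ES Sc) (sigma Sc x) (sigma Sc y))"

definition G_eq :: "('g, 's, 'z) scenario_scheme \<Rightarrow> 'g \<Rightarrow> 'g \<Rightarrow> bool" where
  "G_eq Sc x y \<longleftrightarrow> x \<in> LT Sc \<and> y \<in> LT Sc \<and> x \<noteq> y \<and> tT_lca Sc x y = tS_lca Sc x y"

definition G_lt :: "('g, 's, 'z) scenario_scheme \<Rightarrow> 'g \<Rightarrow> 'g \<Rightarrow> bool" where
  "G_lt Sc x y \<longleftrightarrow> x \<in> LT Sc \<and> y \<in> LT Sc \<and> x \<noteq> y \<and> tT_lca Sc x y < tS_lca Sc x y"

definition G_gt :: "('g, 's, 'z) scenario_scheme \<Rightarrow> 'g \<Rightarrow> 'g \<Rightarrow> bool" where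
  "G_gt Sc x y \<longleftrightarrow> x \<in> LT Sc \<and> y \<in> LT Sc \<and> x \<noteq> y \<and> tT_lca Sc x y > tS_lca Sc x y"

definition rainbow_triangle :: "('g, 's, 'z) scenario_scheme \<Rightarrow> 'g \<Rightarrow> 'g \<Rightarrow> 'g \<Rightarrow> bool" where
  "rainbow_triangle Sc x y z \<longleftrightarrow>
     (G_lt Sc x y \<and> G_eq Sc y z \<and> G_gt Sc x z) \<or>
     (G_lt Sc x y \<and> G_gt Sc y z \<and> G_eq Sc x z) \<or>
     (G_eq Sc x y \<and> G_lt Sc y z \<and> G_gt Sc x z) \<or>
     (G_eq Sc x y \<and> G_gt Sc y z \<and> G_lt Sc x z) \<or>
     (G_gt Sc x y \<and> G_lt Sc y z \<and> G_eq Sc x z) \<or>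
     (G_gt Sc x y \<and> G_eq Sc y z \<and> G_lt Sc x z)"

definition induced_P4 :: "('g \<Rightarrow> 'g \<Rightarrow> bool) \<Rightarrow> 'g set \<Rightarrow> 'g \<Rightarrow> 'g \<Rightarrow> 'g \<Rightarrow> 'g \<Rightarrow> bool" where
  "induced_P4 G V a b c d \<longleftrightarrow>
     {a, b, c, d} \<subseteq> V \<and> distinct [a, b, c, d] \<and>
     G a b \<and> G b c \<and> G c d \<and> \<not> G a c \<and> \<not> G b d \<and> \<not> G a d"

end

theory Submission
  imports Defs
begin

lemma lca_sym: "lca V E x y = lca V E y x"
  unfolding lca_def by (simp add: conj_ac)

lemma anc_chain:
  assumes EV: "E \<subseteq> V \<times> V" and nr: "\<forall>u. (u,r0) \<notin> E"
    and up: "\<forall>v\<in>V-{r0}. \<exists>!u. (u,v) \<in> E"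
    and ux: "(u,x) \<in> E\<^sup>*" and wx: "(w,x) \<in> E\<^sup>*"
  shows "(u,w) \<in> E\<^sup>* \<or> (w,u) \<in> E\<^sup>*"
  using ux wx
proof (induction arbitrary: w rule: rtrancl_induct)
  case base
  then show ?case by simp
next
  case (step y z)
  from step.prems show ?case
  proof (cases rule: rtranclE)
    case base
    then show ?thesis using step.hyps by (meson rtrancl.rtrancl_into_rtrancl)
  next
    case (step y')
    have "z \<in> V" using EV \<open>(y,z) \<in> E\<close> by auto
    moreover have "z \<noteq> r0" using nr \<open>(y,z) \<in> E\<close> by auto
    ultimately have "y' = y" using up \<open>(y,z) \<in> E\<close> \<open>(y',z) \<in> E\<close> by blast
    then show ?thesis using step.IH \<open>(w,y') \<in> E\<^sup>*\<close> by blast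
  qed
qed

lemma tm_le:
  assumes "time_map V E \<tau>" "a \<in> V" "b \<in> V" "preceq E a b"
  shows "\<tau> a \<le> \<tau> b"
  using assms unfolding time_map_def prec_def by (cases "a = b") force+

lemma tm_antisym:
  assumes "time_map V E \<tau>" "a \<in> V" "b \<in> V" "preceq E a b" "preceq E b a"
  shows "a = b"
  using assms unfolding time_map_def prec_def by (metis less_asym)

lemma lca_props:
  assumes T: "planted_phylo_tree V E r0" and tm: "time_map V E \<tau>"
    and x: "x \<in> V" and y: "y \<in> V"
  shows "lca V E x y \<in> V \<and> preceq E x (lca V E x y) \<and> preceq E y (lca V E x y) \<and>
     (\<forall>w \<in> V. preceq E x w \<and> preceq E y w \<longrightarrow> preceq E (lca V E x y) w)"
proof -
  have EV: "E \<subseteq> V \<times> V" and r0: "r0 \<in> V" and reach: "\<forall>v \<in> V. (r0, v) \<in> E\<^sup>*"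
    and nr: "\<forall>u. (u,r0) \<notin> E" and up: "\<forall>v\<in>V-{r0}. \<exists>!u. (u,v) \<in> E" and fin: "finite V"
    using T unfolding planted_phylo_tree_def by auto
  define C where "C = {w \<in> V. preceq E x w \<and> preceq E y w}"
  have "r0 \<in> C" using r0 reach x y unfolding C_def preceq_def by auto
  have "finite C" using fin unfolding C_def by auto
  have ne: "\<tau> ` C \<noteq> {}" using \<open>r0 \<in> C\<close> by blast
  have fi: "finite (\<tau> ` C)" using \<open>finite C\<close> by blast
  obtain z where zeq: "Min (\<tau> ` C) = \<tau> z" and zC: "z \<in> C"
    using Min_in[OF fi ne] by (rule imageE)
  have zmin: "\<forall>w \<in> C. \<tau> z \<le> \<tau> w"
    using Min_le[OF fi] zeq by (metis image_eqI)
  have zl: "\<forall>w \<in> C. preceq E z w"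
  proof
    fix w assume wC: "w \<in> C"
    have "(z,w) \<in> E\<^sup>* \<or> (w,z) \<in> E\<^sup>*"
      using anc_chain[OF EV nr up, of z x w] zC wC unfolding C_def preceq_def by auto
    moreover have "(z,w) \<in> E\<^sup>* \<Longrightarrow> z = w"
    proof (rule ccontr)
      assume "(z,w) \<in> E\<^sup>*" "z \<noteq> w"
      then have "\<tau> w < \<tau> z" using tm zC wC unfolding time_map_def prec_def preceq_def C_def by auto
      then show False using zmin wC by force
    qed
    ultimately show "preceq E z w" unfolding preceq_def by auto
  qed
  have P: "z \<in> V \<and> preceq E x z \<and> preceq E y z \<and>
     (\<forall>w \<in> V. preceq E x w \<and> preceq E y w \<longrightarrow> preceq E z w)"
    using zC zl unfolding C_def by auto
  have "lca V E x y = z"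
    unfolding lca_def
  proof (rule the_equality)
    show "z \<in> V \<and> preceq E x z \<and> preceq E y z \<and>
     (\<forall>w \<in> V. preceq E x w \<and> preceq E y w \<longrightarrow> preceq E z w)" by (rule P)
  next
    fix z' assume "z' \<in> V \<and> preceq E x z' \<and> preceq E y z' \<and>
     (\<forall>w \<in> V. preceq E x w \<and> preceq E y w \<longrightarrow> preceq E z' w)"
    then show "z' = z" using P tm_antisym[OF tm] by blast
  qed
  then show ?thesis using P by simp
qed

lemma ultra:
  assumes T: "planted_phylo_tree V E r0" and tm: "time_map V E \<tau>"
    and x: "x \<in> V" and y: "y \<in> V" and z: "z \<in> V"
  shows "\<tau> (lca V E x y) \<le> \<tau> (lca V E x z) \<or> \<tau> (lca V E x y) \<le> \<tau> (lca V E y z)"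
proof -
  have EV: "E \<subseteq> V \<times> V" and nr: "\<forall>u. (u,r0) \<notin> E" and up: "\<forall>v\<in>V-{r0}. \<exists>!u. (u,v) \<in> E"
    using T unfolding planted_phylo_tree_def by auto
  define p where "p = lca V E x z"
  define q where "q = lca V E y z"
  define l where "l = lca V E x y"
  note Lp = lca_props[OF T tm x z, folded p_def]
  note Lq = lca_props[OF T tm y z, folded q_def]
  note Ll = lca_props[OF T tm x y, folded l_def]
  have "(p,q) \<in> E\<^sup>* \<or> (q,p) \<in> E\<^sup>*"
    using anc_chain[OF EV nr up, of p z q] Lp Lq unfolding preceq_def by auto
  then show ?thesis
  proof
    assume "(q,p) \<in> E\<^sup>*"
    then have "preceq E x p" "preceq E p q" "preceq E y q"
      using Lp Lq unfolding preceq_def by auto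
    then have "preceq E x q" unfolding preceq_def by auto
    then have "preceq E l q" using Ll Lq \<open>preceq E y q\<close> by blast
    then have "\<tau> l \<le> \<tau> q" using tm_le[OF tm] Ll Lq by blast
    then show ?thesis unfolding l_def q_def by simp
  next
    assume "(p,q) \<in> E\<^sup>*"
    then have "preceq E y q" "preceq E q p" "preceq E x p"
      using Lp Lq unfolding preceq_def by auto
    then have "preceq E y p" unfolding preceq_def by auto
    then have "preceq E l p" using Ll Lp \<open>preceq E x p\<close> by blast
    then have "\<tau> l \<le> \<tau> p" using tm_le[OF tm] Ll Lp by blast
    then show ?thesis unfolding l_def p_def by simp
  qed
qed

lemma leaf_V: "x \<in> leaves V E \<Longrightarrow> x \<in> V"
  unfolding leaves_def by auto

lemma rs_parts:
  assumes "relaxed_scenario Sc"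
  shows "planted_phylo_tree (VT Sc) (ET Sc) (rT Sc)" "planted_phylo_tree (VS Sc) (ES Sc) (rS Sc)"
    "time_map (VT Sc) (ET Sc) (tauT Sc)" "time_map (VS Sc) (ES Sc) (tauS Sc)"
    "\<forall>x \<in> LT Sc. sigma Sc x \<in> LS Sc"
  using assms unfolding relaxed_scenario_def by auto

lemma ultT:
  assumes "relaxed_scenario Sc" "x \<in> LT Sc" "y \<in> LT Sc" "z \<in> LT Sc"
  shows "tT_lca Sc x y \<le> tT_lca Sc x z \<or> tT_lca Sc x y \<le> tT_lca Sc y z"
  unfolding tT_lca_def
  by (rule ultra[OF rs_parts(1,3)[OF assms(1)] leaf_V leaf_V leaf_V]) (use assms in auto)

lemma ultS:
  assumes "relaxed_scenario Sc" "x \<in> LT Sc" "y \<in> LT Sc" "z \<in> LT Sc"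
  shows "tS_lca Sc x y \<le> tS_lca Sc x z \<or> tS_lca Sc x y \<le> tS_lca Sc y z"
proof -
  have "sigma Sc x \<in> LS Sc" "sigma Sc y \<in> LS Sc" "sigma Sc z \<in> LS Sc"
    using assms(2-4) rs_parts(5)[OF assms(1)] by auto
  then show ?thesis
    unfolding tS_lca_def
    by (rule ultra[OF rs_parts(2,4)[OF assms(1)] leaf_V leaf_V leaf_V])
qed

lemma tT_sym: "tT_lca Sc x y = tT_lca Sc y x"
  unfolding tT_lca_def using lca_sym by metis
lemma tS_sym: "tS_lca Sc x y = tS_lca Sc y x"
  unfolding tS_lca_def using lca_sym by metis

lemma comb:
  fixes ab ac ad bc bd cd sab sac sad sbc sbd scd :: real
  assumes "ab \<le> ac \<or> ab \<le> bc" "ac \<le> ab \<or> ac \<le> bc" "bc \<le> ab \<or> bc \<le> ac"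
   "bc \<le> bd \<or> bc \<le> cd" "bd \<le> bc \<or> bd \<le> cd" "cd \<le> bc \<or> cd \<le> bd"
   "ab \<le> ad \<or> ab \<le> bd" "ad \<le> ab \<or> ad \<le> bd" "bd \<le> ab \<or> bd \<le> ad"
   "ac \<le> ad \<or> ac \<le> cd" "ad \<le> ac \<or> ad \<le> cd" "cd \<le> ac \<or> cd \<le> ad"
   "sab \<le> sac \<or> sab \<le> sbc" "sac \<le> sab \<or> sac \<le> sbc" "sbc \<le> sab \<or> sbc \<le> sac"
   "sbc \<le> sbd \<or> sbc \<le> scd" "sbd \<le> sbc \<or> sbd \<le> scd" "scd \<le> sbc \<or> scd \<le> sbd"
   "sab \<le> sad \<or> sab \<le> sbd" "sad \<le> sab \<or> sad \<le> sbd" "sbd \<le> sab \<or> sbd \<le> sad"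
   "sac \<le> sad \<or> sac \<le> scd" "sad \<le> sac \<or> sad \<le> scd" "scd \<le> sac \<or> scd \<le> sad"
   "ab = sab" "bc = sbc" "cd = scd" "ac \<noteq> sac" "bd \<noteq> sbd" "ad \<noteq> sad"
  shows "(ad < sad \<and> ac > sac \<and> bd > sbd) \<or> (ad > sad \<and> ac < sac \<and> bd < sbd)"
  using assms by (smt (verit))

theorem lemma19:
  fixes Sc :: "('g, 's) scenario"
  assumes "relaxed_scenario Sc"
    and "induced_P4 (G_eq Sc) (LT Sc) a b c d"
  shows "((G_lt Sc a d \<and> G_gt Sc a c \<and> G_gt Sc b d) \<or>
          (G_gt Sc a d \<and> G_lt Sc a c \<and> G_lt Sc b d)) \<and>
         rainbow_triangle Sc a b d \<and> rainbow_triangle Sc a c d"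
proof -
  have L: "a \<in> LT Sc" "b \<in> LT Sc" "c \<in> LT Sc" "d \<in> LT Sc"
    and D: "distinct [a,b,c,d]"
    and E: "tT_lca Sc a b = tS_lca Sc a b" "tT_lca Sc b c = tS_lca Sc b c"
       "tT_lca Sc c d = tS_lca Sc c d"
    and N: "tT_lca Sc a c \<noteq> tS_lca Sc a c" "tT_lca Sc b d \<noteq> tS_lca Sc b d"
       "tT_lca Sc a d \<noteq> tS_lca Sc a d"
    using assms(2) unfolding induced_P4_def G_eq_def by auto
  have sy: "tT_lca Sc b a = tT_lca Sc a b" "tS_lca Sc b a = tS_lca Sc a b" "tT_lca Sc c a = tT_lca Sc a c" "tS_lca Sc c a = tS_lca Sc a c" "tT_lca Sc d a = tT_lca Sc a d" "tS_lca Sc d a = tS_lca Sc a d" "tT_lca Sc c b = tT_lca Sc b c" "tS_lca Sc c b = tS_lca Sc b c" "tT_lca Sc d b = tT_lca Sc b d" "tS_lca Sc d b = tS_lca Sc b d" "tT_lca Sc d c = tT_lca Sc c d" "tS_lca Sc d c = tS_lca Sc c d"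
    by (simp_all only: tT_sym[of Sc] tS_sym[of Sc])
  have X: "(tT_lca Sc a d < tS_lca Sc a d \<and> tT_lca Sc a c > tS_lca Sc a c \<and> tT_lca Sc b d > tS_lca Sc b d) \<or>
        (tT_lca Sc a d > tS_lca Sc a d \<and> tT_lca Sc a c < tS_lca Sc a c \<and> tT_lca Sc b d < tS_lca Sc b d)"
        apply (rule comb[where ab="tT_lca Sc a b" and ac="tT_lca Sc a c" and ad="tT_lca Sc a d" and bc="tT_lca Sc b c" and bd="tT_lca Sc b d" and cd="tT_lca Sc c d" and sab="tS_lca Sc a b" and sac="tS_lca Sc a c" and sad="tS_lca Sc a d" and sbc="tS_lca Sc b c" and sbd="tS_lca Sc b d" and scd="tS_lca Sc c d"])
    subgoal using ultT[OF assms(1), of a b c] L sy by simp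
    subgoal using ultT[OF assms(1), of a c b] L sy by simp
    subgoal using ultT[OF assms(1), of b c a] L sy by simp
    subgoal using ultT[OF assms(1), of b c d] L sy by simp
    subgoal using ultT[OF assms(1), of b d c] L sy by simp
    subgoal using ultT[OF assms(1), of c d b] L sy by simp
    subgoal using ultT[OF assms(1), of a b d] L sy by simp
    subgoal using ultT[OF assms(1), of a d b] L sy by simp
    subgoal using ultT[OF assms(1), of b d a] L sy by simp
    subgoal using ultT[OF assms(1), of a c d] L sy by simp
    subgoal using ultT[OF assms(1), of a d c] L sy by simp
    subgoal using ultT[OF assms(1), of c d a] L sy by simp
    subgoal using ultS[OF assms(1), of a b c] L sy by simp
    subgoal using ultS[OF assms(1), of a c b] L sy by simp
    subgoal using ultS[OF assms(1), of b c a] L sy by simp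
    subgoal using ultS[OF assms(1), of b c d] L sy by simp
    subgoal using ultS[OF assms(1), of b d c] L sy by simp
    subgoal using ultS[OF assms(1), of c d b] L sy by simp
    subgoal using ultS[OF assms(1), of a b d] L sy by simp
    subgoal using ultS[OF assms(1), of a d b] L sy by simp
    subgoal using ultS[OF assms(1), of b d a] L sy by simp
    subgoal using ultS[OF assms(1), of a c d] L sy by simp
    subgoal using ultS[OF assms(1), of a d c] L sy by simp
    subgoal using ultS[OF assms(1), of c d a] L sy by simp
    using E N by simp_all
  have Gab: "G_eq Sc a b" and Gcd: "G_eq Sc c d"
    using assms(2) unfolding induced_P4_def by auto
  have ne: "a \<noteq> d" "a \<noteq> c" "b \<noteq> d" using D by auto
  show ?thesis
  proof (rule disjE[OF X])
    assume h: "tT_lca Sc a d < tS_lca Sc a d \<and> tT_lca Sc a c > tS_lca Sc a c \<and> tT_lca Sc b d > tS_lca Sc b d"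
    have g: "G_lt Sc a d" "G_gt Sc a c" "G_gt Sc b d"
      using h L ne unfolding G_lt_def G_gt_def by simp_all
    show ?thesis unfolding rainbow_triangle_def by (simp only: g Gab Gcd simp_thms)
  next
    assume h: "tT_lca Sc a d > tS_lca Sc a d \<and> tT_lca Sc a c < tS_lca Sc a c \<and> tT_lca Sc b d < tS_lca Sc b d"
    have g: "G_gt Sc a d" "G_lt Sc a c" "G_lt Sc b d"
      using h L ne unfolding G_lt_def G_gt_def by simp_all
    show ?thesis unfolding rainbow_triangle_def by (simp only: g Gab Gcd simp_thms)
  qed
qed

end
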